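(* Let $X$ be a shift space over $\mathcal{A}$, $\sigma:\mathcal{A}^*\to\mathcal{B}^*$ an injective and strongly left proper morphism with first letter $\ell$, $Y$ the image of $X$ under $\sigma$, and $v\in\mathcal{L}(X)$ bispecial. If $(s,p)\in\mathcal{T}^-_v(\sigma)\times\mathcal{T}^+_v(\sigma)$ is such that $u=s\sigma(v)p$ is an extended image of $v$, then the extension graph $\mathcal{E}_Y(u)$ is the image of $\mathcal{E}_{X,s,p}(v)$ under the graph morphism $\varphi_{v,s,p}:\mathcal{E}_{X,s,p}(v)\to\mathcal{E}_Y(u)$ which, for every child $s'$ of $s$ in $\overline{\mathcal{T}^-_v(\sigma)}$, maps all left vertices belonging to $E^-_{X,s'}(v)$ to the left vertex labeled by the letter $a\in\mathcal{B}$ such that $s'\in\mathcal{B}^*as$, and, for every child $p'$ of $p$ in $\overline{\mathcal{T}^+_v(\sigma)}$, maps all right vertices belonging to $E^+_{X,p'}(v)$ to the right vertex labeled by the letter $b\in\mathcal{B}$ such that $p'\in pb\mathcal{B}^*$. In particular, if $\mathcal{T}^-_v(\sigma)=\{s_0\}$ and $\mathcal{T}^+_v(\sigma)=\{p_0\}$, then $v$ has a unique bispecial extended image $u$ and the associated morphism $\varphi_{v,s_0,p_0}$ is an isomorphism.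
   Context: A shift space over $\mathcal{A}$ is a closed shift-invariant $X\subseteq\mathcal{A}^{\mathbb{Z}}$ in which all letters occur, with factor set $\mathcal{L}(X)$. For $w\in\mathcal{L}(X)$: $E^-_X(w)=\{a:aw\in\mathcal{L}(X)\}$, $E^+_X(w)=\{b:wb\in\mathcal{L}(X)\}$, $E_X(w)=\{(a,b):awb\in\mathcal{L}(X)\}$; the extension graph $\mathcal{E}_X(w)$ is the bipartite graph on left vertices $E^-_X(w)$ and right vertices $E^+_X(w)$ with edge set $E_X(w)$; $w$ is bispecial if both $E^\pm_X(w)$ have at least two elements. Morphisms are non-erasing; $\sigma$ is strongly left proper with first letter $\ell$ if every $\sigma(a)$ begins with $\ell$ and contains $\ell$ exactly once. The image of $X$ under $\sigma$ is $Y=\{S^k\sigma(x):x\in X,0\le k<|\sigma(x_0)|\}$. Fact (antecedents): for every non-empty $u\in\mathcal{L}(Y)$ containing $\ell$ there is a unique triple $(s,v,p)$, $v\in\mathcal{L}(X)$, $u=s\sigma(v)p$, such that for some $(a,b)\in E_X(v)$, $s$ is a proper suffix of $\sigma(a)$ and $p$ a non-empty prefix of $\sigma(b)$; then $u$ is an extended image of $v$. Notation: $s(a_1,a_2)$, $p(b_1,b_2)$ are the longest common suffix of $\sigma(a_1),\sigma(a_2)$ and longest common prefix of $\sigma(b_1),\sigma(b_2)$. $\mathcal{T}^-_v(\sigma)=\{s(a_1,a_2):a_1\ne a_2\in E^-_X(v)\}$, $\mathcal{T}^+_v(\sigma)=\{p(b_1,b_2):b_1\ne b_2\in E^+_X(v)\}$,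 $\overline{\mathcal{T}^-_v(\sigma)}=\mathcal{T}^-_v(\sigma)\cup\sigma(E^-_X(v))$, $\overline{\mathcal{T}^+_v(\sigma)}=\mathcal{T}^+_v(\sigma)\cup\sigma(E^+_X(v))\ell$. The suffix order (resp. prefix order) makes $\overline{\mathcal{T}^-_v(\sigma)}$ (resp. $\overline{\mathcal{T}^+_v(\sigma)}$) a rooted tree whose root $s_0$ (resp. $p_0$) is its shortest word; a child of a node $s$ is an element $s'$ having $s$ as a proper suffix with no element strictly in between (similarly with prefixes). For words $x,y$: $E^-_{X,x}(v)=\{a\in E^-_X(v):\sigma(a)\in\mathcal{B}^*x\}$, $E^+_{X,y}(v)=\{b\in E^+_X(v):\sigma(b)\ell\in y\mathcal{B}^*\}$, $E_{X,x,y}(v)=E_X(v)\cap(E^-_{X,x}(v)\times E^+_{X,y}(v))$, and $\mathcal{E}_{X,x,y}(v)$ is the subgraph of $\mathcal{E}_X(v)$ with edge set $E_{X,x,y}(v)$ and vertices those incident to these edges. *)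

theory Defs
  imports "HOL-Analysis.Analysis" "HOL-Library.Sublist"
begin

definition shift :: "(int \<Rightarrow> 'a) \<Rightarrow> (int \<Rightarrow> 'a)" where
  "shift x = (\<lambda>n. x (n + 1))"

definition shift_space :: "(int \<Rightarrow> 'a) set \<Rightarrow> bool" where
  "shift_space X \<longleftrightarrow>
     closedin (product_topology (\<lambda>_. discrete_topology (UNIV :: 'a set)) UNIV) X
   \<and> shift ` X = X
   \<and> (\<forall>a. \<exists>x\<in>X. \<exists>n. x n = a)"

definition lang :: "(int \<Rightarrow> 'a) set \<Rightarrow> 'a list set" where
  "lang X = {w. \<exists>x\<in>X. \<exists>i::int. w = map (\<lambda>j. x (i + int j)) [0..<length w]}"

definition ext_left :: "(int \<Rightarrow> 'a) set \<Rightarrow> 'a list \<Rightarrow> 'a set" where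
  "ext_left X w = {a. a # w \<in> lang X}"

definition ext_right :: "(int \<Rightarrow> 'a) set \<Rightarrow> 'a list \<Rightarrow> 'a set" where
  "ext_right X w = {b. w @ [b] \<in> lang X}"

definition ext_pairs :: "(int \<Rightarrow> 'a) set \<Rightarrow> 'a list \<Rightarrow> ('a \<times> 'a) set" where
  "ext_pairs X w = {(a, b). a # w @ [b] \<in> lang X}"

definition bispecial :: "(int \<Rightarrow> 'a) set \<Rightarrow> 'a list \<Rightarrow> bool" where
  "bispecial X w \<longleftrightarrow> w \<in> lang X \<and> 2 \<le> card (ext_left X w) \<and> 2 \<le> card (ext_right X w)"

definition morph :: "('a \<Rightarrow> 'b list) \<Rightarrow> 'a list \<Rightarrow> 'b list" where
  "morph \<sigma> w = concat (map \<sigma> w)"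

definition non_erasing :: "('a \<Rightarrow> 'b list) \<Rightarrow> bool" where
  "non_erasing \<sigma> \<longleftrightarrow> (\<forall>a. \<sigma> a \<noteq> [])"

definition injective_morph :: "('a \<Rightarrow> 'b list) \<Rightarrow> bool" where
  "injective_morph \<sigma> \<longleftrightarrow> inj (morph \<sigma>)"

definition strongly_left_proper :: "('a \<Rightarrow> 'b list) \<Rightarrow> 'b \<Rightarrow> bool" where
  "strongly_left_proper \<sigma> l \<longleftrightarrow> (\<forall>a. \<exists>w. \<sigma> a = l # w \<and> l \<notin> set w)"

text \<open>Positions where the image blocks start: block k of sigma(x) starts at cumlen k,
 with block 0 starting at position 0.\<close>
definition cumlen :: "('a \<Rightarrow> 'b list) \<Rightarrow> (int \<Rightarrow> 'a) \<Rightarrow> int \<Rightarrow> int" where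
  "cumlen \<sigma> x k =
     (if 0 \<le> k then (\<Sum>i\<in>{0..<k}. int (length (\<sigma> (x i))))
      else - (\<Sum>i\<in>{k..<0}. int (length (\<sigma> (x i)))))"

text \<open>The bi-infinite sequence sigma(x) = ... sigma(x_{-1}) . sigma(x_0) sigma(x_1) ...\<close>
definition morph_seq :: "('a \<Rightarrow> 'b list) \<Rightarrow> (int \<Rightarrow> 'a) \<Rightarrow> int \<Rightarrow> 'b" where
  "morph_seq \<sigma> x n =
     (let k = (THE k. cumlen \<sigma> x k \<le> n \<and> n < cumlen \<sigma> x (k + 1))
      in \<sigma> (x k) ! nat (n - cumlen \<sigma> x k))"

definition image_shift :: "('a \<Rightarrow> 'b list) \<Rightarrow> (int \<Rightarrow> 'a) set \<Rightarrow> (int \<Rightarrow> 'b) set" where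
  "image_shift \<sigma> X =
     {(\<lambda>n. morph_seq \<sigma> x (n + int k)) | x k. x \<in> X \<and> k < length (\<sigma> (x 0))}"

definition ext_image_via ::
  "('a \<Rightarrow> 'b list) \<Rightarrow> (int \<Rightarrow> 'a) set \<Rightarrow> 'a list \<Rightarrow> 'b list \<Rightarrow> 'b list \<Rightarrow> bool" where
  "ext_image_via \<sigma> X v s p \<longleftrightarrow> v \<in> lang X \<and>
     (\<exists>(a, b) \<in> ext_pairs X v. strict_suffix s (\<sigma> a) \<and> p \<noteq> [] \<and> prefix p (\<sigma> b))"

definition extended_image ::
  "('a \<Rightarrow> 'b list) \<Rightarrow> (int \<Rightarrow> 'a) set \<Rightarrow> 'a list \<Rightarrow> 'b list \<Rightarrow> bool" where
  "extended_image \<sigma> X v u \<longleftrightarrow>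
     (\<exists>s p. u = s @ morph \<sigma> v @ p \<and> ext_image_via \<sigma> X v s p)"

definition lcsuffix :: "'b list \<Rightarrow> 'b list \<Rightarrow> 'b list" where
  "lcsuffix xs ys = rev (longest_common_prefix (rev xs) (rev ys))"

definition Tminus :: "('a \<Rightarrow> 'b list) \<Rightarrow> (int \<Rightarrow> 'a) set \<Rightarrow> 'a list \<Rightarrow> 'b list set" where
  "Tminus \<sigma> X v = {lcsuffix (\<sigma> a1) (\<sigma> a2) | a1 a2.
                      a1 \<in> ext_left X v \<and> a2 \<in> ext_left X v \<and> a1 \<noteq> a2}"

definition Tplus :: "('a \<Rightarrow> 'b list) \<Rightarrow> (int \<Rightarrow> 'a) set \<Rightarrow> 'a list \<Rightarrow> 'b list set" where
  "Tplus \<sigma> X v = {longest_common_prefix (\<sigma> b1) (\<sigma> b2) | b1 b2.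
                      b1 \<in> ext_right X v \<and> b2 \<in> ext_right X v \<and> b1 \<noteq> b2}"

definition Tminus_bar :: "('a \<Rightarrow> 'b list) \<Rightarrow> (int \<Rightarrow> 'a) set \<Rightarrow> 'a list \<Rightarrow> 'b list set" where
  "Tminus_bar \<sigma> X v = Tminus \<sigma> X v \<union> \<sigma> ` ext_left X v"

definition Tplus_bar ::
  "('a \<Rightarrow> 'b list) \<Rightarrow> 'b \<Rightarrow> (int \<Rightarrow> 'a) set \<Rightarrow> 'a list \<Rightarrow> 'b list set" where
  "Tplus_bar \<sigma> l X v = Tplus \<sigma> X v \<union> (\<lambda>b. \<sigma> b @ [l]) ` ext_right X v"

definition suffix_child :: "'b list set \<Rightarrow> 'b list \<Rightarrow> 'b list \<Rightarrow> bool" where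
  "suffix_child T s s' \<longleftrightarrow> s' \<in> T \<and> strict_suffix s s' \<and>
     \<not> (\<exists>t\<in>T. strict_suffix s t \<and> strict_suffix t s')"

definition prefix_child :: "'b list set \<Rightarrow> 'b list \<Rightarrow> 'b list \<Rightarrow> bool" where
  "prefix_child T p p' \<longleftrightarrow> p' \<in> T \<and> strict_prefix p p' \<and>
     \<not> (\<exists>t\<in>T. strict_prefix p t \<and> strict_prefix t p')"

definition ext_left_x ::
  "('a \<Rightarrow> 'b list) \<Rightarrow> (int \<Rightarrow> 'a) set \<Rightarrow> 'a list \<Rightarrow> 'b list \<Rightarrow> 'a set" where
  "ext_left_x \<sigma> X v x = {a \<in> ext_left X v. suffix x (\<sigma> a)}"

definition ext_right_y ::
  "('a \<Rightarrow> 'b list) \<Rightarrow> 'b \<Rightarrow> (int \<Rightarrow> 'a) set \<Rightarrow> 'a list \<Rightarrow> 'b list \<Rightarrow> 'a set" where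
  "ext_right_y \<sigma> l X v y = {b \<in> ext_right X v. prefix y (\<sigma> b @ [l])}"

definition ext_pairs_xy ::
  "('a \<Rightarrow> 'b list) \<Rightarrow> 'b \<Rightarrow> (int \<Rightarrow> 'a) set \<Rightarrow> 'a list \<Rightarrow> 'b list \<Rightarrow> 'b list
     \<Rightarrow> ('a \<times> 'a) set" where
  "ext_pairs_xy \<sigma> l X v x y =
     ext_pairs X v \<inter> (ext_left_x \<sigma> X v x \<times> ext_right_y \<sigma> l X v y)"

definition phi_left ::
  "('a \<Rightarrow> 'b list) \<Rightarrow> (int \<Rightarrow> 'a) set \<Rightarrow> 'a list \<Rightarrow> 'b list \<Rightarrow> 'a \<Rightarrow> 'b" where
  "phi_left \<sigma> X v s a = (THE c. \<exists>s'. suffix_child (Tminus_bar \<sigma> X v) s s' \<and>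
       a \<in> ext_left_x \<sigma> X v s' \<and> (\<exists>w. s' = w @ [c] @ s))"

definition phi_right ::
  "('a \<Rightarrow> 'b list) \<Rightarrow> 'b \<Rightarrow> (int \<Rightarrow> 'a) set \<Rightarrow> 'a list \<Rightarrow> 'b list \<Rightarrow> 'a \<Rightarrow> 'b" where
  "phi_right \<sigma> l X v p b = (THE c. \<exists>p'. prefix_child (Tplus_bar \<sigma> l X v) p p' \<and>
       b \<in> ext_right_y \<sigma> l X v p' \<and> (\<exists>w. p' = p @ [c] @ w))"

end

theory Submission
  imports Defs
begin


lemma suffix_same_len: "suffix xs zs \<Longrightarrow> suffix ys zs \<Longrightarrow> length xs = length ys \<Longrightarrow> xs = ys"
  by (auto simp: suffix_def append_eq_append_conv)

lemma prefix_same_len: "prefix xs zs \<Longrightarrow> prefix ys zs \<Longrightarrow> length xs = length ys \<Longrightarrow> xs = ys"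
  by (auto simp: prefix_def append_eq_append_conv)

lemma lcs1: "suffix (lcsuffix xs ys) xs"
  unfolding lcsuffix_def suffix_to_prefix by (simp add: longest_common_prefix_prefix1)
lemma lcs2: "suffix (lcsuffix xs ys) ys"
  unfolding lcsuffix_def suffix_to_prefix by (simp add: longest_common_prefix_prefix2)
lemma lcs_max: "suffix t xs \<Longrightarrow> suffix t ys \<Longrightarrow> suffix t (lcsuffix xs ys)"
  unfolding lcsuffix_def suffix_to_prefix by (simp add: longest_common_prefix_max_prefix)

lemma morph_simps[simp]: "morph \<sigma> [] = []" "morph \<sigma> (a # w) = \<sigma> a @ morph \<sigma> w"
  "morph \<sigma> (u @ w) = morph \<sigma> u @ morph \<sigma> w"
  by (auto simp: morph_def)

lemma inj_letter: "injective_morph \<sigma> \<Longrightarrow> \<sigma> a = \<sigma> b \<Longrightarrow> a = b"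
  unfolding injective_morph_def
  by (metis append.right_neutral inj_eq list.inject morph_simps(1,2))

lemma slpD: "strongly_left_proper \<sigma> l \<Longrightarrow> \<exists>w. \<sigma> a = l # w \<and> l \<notin> set w"
  by (simp add: strongly_left_proper_def)

lemma morph_Nil_iff: "strongly_left_proper \<sigma> l \<Longrightarrow> morph \<sigma> z = [] \<longleftrightarrow> z = []"
  by (cases z) (auto dest: slpD[where a="hd z"])

lemma cut:
  assumes slp: "strongly_left_proper \<sigma> l"
  shows "morph \<sigma> z = A @ l # B \<Longrightarrow> \<exists>z1 z2. z = z1 @ z2 \<and> morph \<sigma> z1 = A \<and> morph \<sigma> z2 = l # B"
proof (induction z arbitrary: A)
  case Nil then show ?case by simp
next
  case (Cons a zt)
  obtain w where w: "\<sigma> a = l # w" "l \<notin> set w" using slpD[OF slp] by blast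
  show ?case
  proof (cases A)
    case Nil then show ?thesis using Cons.prems by (intro exI[of _ "[]"] exI[of _ "a # zt"]) auto
  next
    case (Cons c A')
    with Cons.prems w have c: "c = l" and eq: "w @ morph \<sigma> zt = A' @ l # B" by auto
    from eq obtain us where "(w = A' @ us \<and> us @ morph \<sigma> zt = l # B) \<or> (w @ us = A' \<and> morph \<sigma> zt = us @ l # B)"
      by (auto simp: append_eq_append_conv2)
    then show ?thesis
    proof
      assume h: "w = A' @ us \<and> us @ morph \<sigma> zt = l # B"
      have "us = []" using h w(2) by (cases us) auto
      then show ?thesis using h w Cons c by (intro exI[of _ "[a]"] exI[of _ zt]) auto
    next
      assume h: "w @ us = A' \<and> morph \<sigma> zt = us @ l # B"
      then obtain z1 z2 where "zt = z1 @ z2" "morph \<sigma> z1 = us" "morph \<sigma> z2 = l # B"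
        using Cons.IH by blast
      then show ?thesis using h w Cons c by (intro exI[of _ "a # z1"] exI[of _ z2]) auto
    qed
  qed
qed


lemma morph_hd: "strongly_left_proper \<sigma> l \<Longrightarrow> \<exists>r. morph \<sigma> v @ l # q = l # r"
  by (cases v) (auto dest: slpD[where a="hd v"])

lemma morph_hd2: "strongly_left_proper \<sigma> l \<Longrightarrow> z \<noteq> [] \<Longrightarrow> \<exists>r. morph \<sigma> z = l # r"
  by (cases z) (auto dest: slpD[where a="hd z"])

lemma sync:
  assumes slp: "strongly_left_proper \<sigma> l" and inj: "injective_morph \<sigma>"
    and s: "l \<notin> set s" and p: "p = l # p'" "l \<notin> set p'"
    and eq: "morph \<sigma> z = pre @ c # s @ morph \<sigma> v @ p @ d # suf"
  shows "\<exists>z1 a b z3. z = z1 @ a # v @ b # z3 \<and> suffix (c # s) (\<sigma> a) \<and> prefix (p @ [d]) (\<sigma> b @ [l])"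
proof -
  obtain r where r: "morph \<sigma> v @ l # (p' @ d # suf) = l # r" using morph_hd[OF slp] by blast
  have "morph \<sigma> z = (pre @ c # s) @ l # r" using eq p r by simp
  then obtain zA zB where zAB: "z = zA @ zB" "morph \<sigma> zA = pre @ c # s" "morph \<sigma> zB = l # r"
    using cut[OF slp] by blast
  have "morph \<sigma> zB = morph \<sigma> v @ l # (p' @ d # suf)" using zAB r by simp
  then obtain zv zC where zC: "zB = zv @ zC" "morph \<sigma> zv = morph \<sigma> v" "morph \<sigma> zC = l # (p' @ d # suf)"
    using cut[OF slp] by blast
  have zv: "zv = v" using zC(2) inj unfolding injective_morph_def by (simp add: inj_eq)
  have "zA \<noteq> []" using zAB(2) by auto
  then obtain zA' a where a: "zA = zA' @ [a]" by (cases zA rule: rev_exhaust) auto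
  obtain wa where wa: "\<sigma> a = l # wa" "l \<notin> set wa" using slpD[OF slp] by blast
  have "morph \<sigma> zA' @ \<sigma> a = (pre @ [c]) @ s" using zAB(2) a by simp
  then obtain us where "(morph \<sigma> zA' = (pre @ [c]) @ us \<and> us @ \<sigma> a = s) \<or> (morph \<sigma> zA' @ us = pre @ [c] \<and> \<sigma> a = us @ s)"
    using append_eq_append_conv2[of "morph \<sigma> zA'" "\<sigma> a" "pre @ [c]" s] by blast
  then have sa: "suffix (c # s) (\<sigma> a)"
  proof
    assume "morph \<sigma> zA' = (pre @ [c]) @ us \<and> us @ \<sigma> a = s"
    then have "l \<in> set s" using wa by auto
    with s show ?thesis by simp
  next
    assume h: "morph \<sigma> zA' @ us = pre @ [c] \<and> \<sigma> a = us @ s"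
    have "us \<noteq> []"
    proof
      assume "us = []"
      then have "s = l # wa" using h wa by simp
      then show False using s by simp
    qed
    then obtain us' where "us = us' @ [c]" using h
      by (cases us rule: rev_exhaust) auto
    then show ?thesis using h by (auto simp: suffix_def)
  qed
  have "zC \<noteq> []" using zC(3) by auto
  then obtain b z3 where bz: "zC = b # z3" by (cases zC) auto
  obtain wb where wb: "\<sigma> b = l # wb" "l \<notin> set wb" using slpD[OF slp] by blast
  have "wb @ morph \<sigma> z3 = p' @ d # suf" using zC(3) bz wb by simp
  then obtain us where "(wb = p' @ us \<and> us @ morph \<sigma> z3 = d # suf) \<or> (wb @ us = p' \<and> morph \<sigma> z3 = us @ d # suf)"
    using append_eq_append_conv2[of wb "morph \<sigma> z3" p' "d # suf"] by blast
  then have pb: "prefix (p @ [d]) (\<sigma> b @ [l])"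
  proof
    assume h: "wb = p' @ us \<and> us @ morph \<sigma> z3 = d # suf"
    show ?thesis
    proof (cases us)
      case Nil
      then have "z3 \<noteq> []" using h by auto
      then obtain r3 where "morph \<sigma> z3 = l # r3" using morph_hd2[OF slp] by blast
      then show ?thesis using h Nil wb p by auto
    next
      case (Cons e us')
      then show ?thesis using h wb p by (auto simp: prefix_def)
    qed
  next
    assume h: "wb @ us = p' \<and> morph \<sigma> z3 = us @ d # suf"
    show ?thesis
    proof (cases us)
      case Nil
      then have "z3 \<noteq> []" using h by auto
      then obtain r3 where "morph \<sigma> z3 = l # r3" using morph_hd2[OF slp] by blast
      then show ?thesis using h Nil wb p by auto
    next
      case (Cons e us')
      then have "z3 \<noteq> []" using h by auto
      then obtain r3 where "morph \<sigma> z3 = l # r3" using morph_hd2[OF slp] by blast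
      then have "l \<in> set p'" using h Cons by auto
      then show ?thesis using p by simp
    qed
  qed
  show ?thesis using zAB zC zv a bz sa pb by (intro exI[of _ zA'] exI[of _ a] exI[of _ b] exI[of _ z3]) auto
qed



definition win :: "(int \<Rightarrow> 'c) \<Rightarrow> int \<Rightarrow> nat \<Rightarrow> 'c list" where
  "win x i n = map (\<lambda>j. x (i + int j)) [0..<n]"

lemma length_win[simp]: "length (win x i n) = n" by (simp add: win_def)
lemma nth_win[simp]: "j < n \<Longrightarrow> win x i n ! j = x (i + int j)" by (simp add: win_def)
lemma win_Suc: "win x i (Suc n) = win x i n @ [x (i + int n)]" by (simp add: win_def)

lemma lang_win: "w \<in> lang X \<longleftrightarrow> (\<exists>x\<in>X. \<exists>i. w = win x i (length w))"
  by (simp add: lang_def win_def)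

lemma win_in_lang: "x \<in> X \<Longrightarrow> win x i n \<in> lang X"
  unfolding lang_win by auto

lemma win_nth_eq: "w = win x i (length w) \<Longrightarrow> j < length w \<Longrightarrow> w ! j = x (i + int j)"
proof -
  assume h: "w = win x i (length w)" "j < length w"
  have "win x i (length w) ! j = x (i + int j)" using h(2) by simp
  then show ?thesis using h(1) by simp
qed

lemma lang_sublist: assumes "w \<in> lang X" "sublist u w" shows "u \<in> lang X"
proof -
  obtain x i where x: "x \<in> X" "w = win x i (length w)" using assms(1) lang_win by blast
  obtain pr sf where w: "w = pr @ u @ sf" using assms(2) by (auto simp: sublist_def)
  have "u = win x (i + int (length pr)) (length u)"
  proof (rule nth_equalityI)
    fix j assume j: "j < length u"
    have "u ! j = w ! (length pr + j)" using w j by (simp add: nth_append)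
    also have "\<dots> = x (i + int (length pr + j))" using win_nth_eq[OF x(2), of "length pr + j"] j w by (simp only: length_append)
    finally show "u ! j = win x (i + int (length pr)) (length u) ! j" using j by (simp add: add.assoc)
  qed simp
  then show ?thesis using x(1) win_in_lang by metis
qed

lemma lang_ext_right: assumes "w \<in> lang X" shows "\<exists>b. w @ [b] \<in> lang X"
proof -
  obtain x i where x: "x \<in> X" "w = win x i (length w)" using assms(1) lang_win by blast
  have "w @ [x (i + int (length w))] = win x i (Suc (length w))" using x(2) win_Suc by metis
  then show ?thesis using x(1) win_in_lang by metis
qed

lemma lang_ext_left: assumes "w \<in> lang X" shows "\<exists>a. a # w \<in> lang X"
proof -
  obtain x i where x: "x \<in> X" "w = win x i (length w)" using assms(1) lang_win by blast
  have "x (i - 1) # w = win x (i - 1) (Suc (length w))"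
  proof (rule nth_equalityI)
    fix j assume j: "j < length (x (i - 1) # w)"
    show "(x (i - 1) # w) ! j = win x (i - 1) (Suc (length w)) ! j"
    proof (cases j)
      case 0 then show ?thesis by simp
    next
      case (Suc j')
      then have "j' < length w" using j by simp
      then show ?thesis using Suc win_nth_eq[OF x(2)] by simp
    qed
  qed simp
  then show ?thesis using x(1) win_in_lang by metis
qed

lemma cumlen0[simp]: "cumlen \<sigma> x 0 = 0" by (simp add: cumlen_def)

lemma cumlen_step: "cumlen \<sigma> x (k + 1) = cumlen \<sigma> x k + int (length (\<sigma> (x k)))"
proof -
  consider "0 \<le> k" | "k = -1" | "k < -1" by linarith
  then show ?thesis
  proof cases
    case 1
    have "{0..<k+1} = insert k {0..<k}" using 1 by auto
    then show ?thesis using 1 by (simp add: cumlen_def)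
  next
    case 2
    have "{-1..<0::int} = {-1}" by auto
    then show ?thesis using 2 by (simp add: cumlen_def)
  next
    case 3
    have "{k..<0} = insert k {k+1..<0}" using 3 by auto
    then show ?thesis using 3 by (simp add: cumlen_def)
  qed
qed

lemma cumlen_mono_aux: "non_erasing \<sigma> \<Longrightarrow> cumlen \<sigma> x k + int n \<le> cumlen \<sigma> x (k + int n)"
proof (induction n)
  case 0 then show ?case by simp
next
  case (Suc n)
  have L: "length (\<sigma> (x (k + int n))) \<ge> 1" using Suc.prems by (simp add: non_erasing_def Suc_le_eq)
  have e: "k + int (Suc n) = (k + int n) + 1" by simp
  have "cumlen \<sigma> x (k + int (Suc n)) = cumlen \<sigma> x (k + int n) + int (length (\<sigma> (x (k + int n))))"
    unfolding e by (rule cumlen_step)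
  then show ?case using Suc.IH[OF Suc.prems] L by simp
qed

lemma cumlen_less: assumes "non_erasing \<sigma>" "k < k'" shows "cumlen \<sigma> x k < cumlen \<sigma> x k'"
proof -
  define n where "n = nat (k' - k - 1)"
  have n: "k' = k + int n + 1" using assms(2) unfolding n_def by simp
  have "cumlen \<sigma> x k + int n \<le> cumlen \<sigma> x (k + int n)" using cumlen_mono_aux[OF assms(1)] .
  moreover have "length (\<sigma> (x (k + int n))) \<ge> 1" using assms(1) by (simp add: non_erasing_def Suc_le_eq)
  ultimately show ?thesis using n cumlen_step[of \<sigma> x "k + int n"] by simp
qed

lemma cumlen_le: "non_erasing \<sigma> \<Longrightarrow> k \<le> k' \<Longrightarrow> cumlen \<sigma> x k \<le> cumlen \<sigma> x k'"
  using cumlen_less by (metis order_le_less)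

lemma morph_seq_block:
  assumes ne: "non_erasing \<sigma>" and h: "cumlen \<sigma> x k \<le> n" "n < cumlen \<sigma> x (k + 1)"
  shows "morph_seq \<sigma> x n = \<sigma> (x k) ! nat (n - cumlen \<sigma> x k)"
proof -
  have "(THE k. cumlen \<sigma> x k \<le> n \<and> n < cumlen \<sigma> x (k + 1)) = k"
  proof (rule the_equality)
    show "cumlen \<sigma> x k \<le> n \<and> n < cumlen \<sigma> x (k + 1)" using h by simp
  next
    fix k' assume h': "cumlen \<sigma> x k' \<le> n \<and> n < cumlen \<sigma> x (k' + 1)"
    show "k' = k"
    proof (rule ccontr)
      assume "k' \<noteq> k"
      then consider "k' + 1 \<le> k" | "k + 1 \<le> k'" by linarith
      then show False
      proof cases
        case 1 then show False using h h' cumlen_le[OF ne, of "k'+1" k x] by linarith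
      next
        case 2 then show False using h h' cumlen_le[OF ne, of "k+1" k' x] by linarith
      qed
    qed
  qed
  then show ?thesis by (simp add: morph_seq_def Let_def)
qed

lemma morph_win:
  assumes ne: "non_erasing \<sigma>"
  shows "cumlen \<sigma> x K + int (length (morph \<sigma> (win x K m))) = cumlen \<sigma> x (K + int m)
    \<and> (\<forall>t < length (morph \<sigma> (win x K m)). morph_seq \<sigma> x (cumlen \<sigma> x K + int t) = morph \<sigma> (win x K m) ! t)"
proof (induction m)
  case 0 then show ?case by (simp add: win_def)
next
  case (Suc m)
  let ?W = "morph \<sigma> (win x K m)"
  let ?b = "\<sigma> (x (K + int m))"
  have W: "morph \<sigma> (win x K (Suc m)) = ?W @ ?b" by (simp add: win_Suc)
  have len: "cumlen \<sigma> x K + int (length (morph \<sigma> (win x K (Suc m)))) = cumlen \<sigma> x (K + int (Suc m))"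
  proof -
    have e: "K + int (Suc m) = (K + int m) + 1" by simp
    have "cumlen \<sigma> x (K + int (Suc m)) = cumlen \<sigma> x (K + int m) + int (length ?b)"
      unfolding e by (rule cumlen_step)
    then show ?thesis using Suc.IH W by simp
  qed
  moreover have "\<forall>t < length (morph \<sigma> (win x K (Suc m))). morph_seq \<sigma> x (cumlen \<sigma> x K + int t) = morph \<sigma> (win x K (Suc m)) ! t"
  proof (intro allI impI)
    fix t assume t: "t < length (morph \<sigma> (win x K (Suc m)))"
    show "morph_seq \<sigma> x (cumlen \<sigma> x K + int t) = morph \<sigma> (win x K (Suc m)) ! t"
    proof (cases "t < length ?W")
      case True then show ?thesis using Suc.IH W by (simp add: nth_append)
    next
      case False
      have "morph_seq \<sigma> x (cumlen \<sigma> x K + int t) = ?b ! nat (cumlen \<sigma> x K + int t - cumlen \<sigma> x (K + int m))"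
      proof (rule morph_seq_block[OF ne])
        have IH1: "cumlen \<sigma> x K + int (length ?W) = cumlen \<sigma> x (K + int m)" using Suc.IH by blast
        have cs: "cumlen \<sigma> x (K + int m + 1) = cumlen \<sigma> x (K + int m) + int (length ?b)" by (rule cumlen_step)
        have tl: "int t < int (length ?W) + int (length ?b)" using t W by simp
        show "cumlen \<sigma> x (K + int m) \<le> cumlen \<sigma> x K + int t" using IH1 False by linarith
        show "cumlen \<sigma> x K + int t < cumlen \<sigma> x (K + int m + 1)" using IH1 cs tl by linarith
      qed
      also have "\<dots> = ?b ! (t - length ?W)" using Suc.IH False
        by (metis add_diff_cancel_left diff_diff_add nat_int nat_minus_as_int)
      finally show ?thesis using W False by (simp add: nth_append)
    qed
  qed
  ultimately show ?case by blast
qed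


lemma cumlen_pos: "non_erasing \<sigma> \<Longrightarrow> int m \<le> cumlen \<sigma> x (int m)"
  using cumlen_mono_aux[of \<sigma> x 0 m] by simp

lemma cumlen_neg: "non_erasing \<sigma> \<Longrightarrow> cumlen \<sigma> x (- int m) \<le> - int m"
  using cumlen_mono_aux[of \<sigma> x "- int m" m] by simp

lemma sublist_nth: assumes "d + length w \<le> length W" "\<forall>t<length w. w ! t = W ! (d + t)"
  shows "sublist w W"
proof -
  have e: "take (length w) (drop d W) = w"
    by (rule nth_equalityI) (use assms in auto)
  have "W = take d W @ take (length w) (drop d W) @ drop (length w) (drop d W)" by (metis append_take_drop_id)
  then show ?thesis unfolding e sublist_def by blast
qed

lemma lang_image:
  assumes ne: "non_erasing \<sigma>"
  shows "w \<in> lang (image_shift \<sigma> X) \<longleftrightarrow> (\<exists>z\<in>lang X. sublist w (morph \<sigma> z))"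
proof
  assume "w \<in> lang (image_shift \<sigma> X)"
  then obtain y i where y: "y \<in> image_shift \<sigma> X" "w = win y i (length w)" using lang_win by blast
  then obtain x k where x: "x \<in> X" "y = (\<lambda>n. morph_seq \<sigma> x (n + int k))"
    unfolding image_shift_def by blast
  define j where "j = i + int k"
  define n where "n = length w"
  have wt: "\<And>t. t < n \<Longrightarrow> w ! t = morph_seq \<sigma> x (j + int t)"
    using win_nth_eq[OF y(2)] x(2) unfolding j_def n_def by (simp add: ac_simps)
  define M where "M = nat \<bar>j\<bar>"
  define K where "K = - int M"
  define m where "m = M + nat \<bar>j + int n\<bar>"
  have c1: "cumlen \<sigma> x K \<le> j" using cumlen_neg[OF ne, of x M] unfolding K_def M_def by linarith
  have c2: "j + int n \<le> cumlen \<sigma> x (K + int m)"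
    using cumlen_pos[OF ne, of "nat \<bar>j + int n\<bar>" x] unfolding K_def m_def by simp
  let ?W = "morph \<sigma> (win x K m)"
  have mw: "cumlen \<sigma> x K + int (length ?W) = cumlen \<sigma> x (K + int m)"
    "\<And>t. t < length ?W \<Longrightarrow> morph_seq \<sigma> x (cumlen \<sigma> x K + int t) = ?W ! t"
    using morph_win[OF ne, of x K m] by auto
  define d where "d = nat (j - cumlen \<sigma> x K)"
  have dd: "int d = j - cumlen \<sigma> x K" using c1 unfolding d_def by simp
  have "sublist w ?W"
  proof (rule sublist_nth[where d=d])
    show "d + length w \<le> length ?W" using dd mw(1) c2 unfolding n_def by linarith
    show "\<forall>t<length w. w ! t = ?W ! (d + t)"
    proof (intro allI impI)
      fix t assume t: "t < length w"
      have "d + t < length ?W" using dd mw(1) c2 t unfolding n_def by linarith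
      then have "?W ! (d + t) = morph_seq \<sigma> x (cumlen \<sigma> x K + int (d + t))" by (rule mw(2)[symmetric])
      also have "cumlen \<sigma> x K + int (d + t) = j + int t" using dd by simp
      finally show "w ! t = ?W ! (d + t)" using wt t unfolding n_def by simp
    qed
  qed
  then show "\<exists>z\<in>lang X. sublist w (morph \<sigma> z)" using win_in_lang[OF x(1)] by blast
next
  assume "\<exists>z\<in>lang X. sublist w (morph \<sigma> z)"
  then obtain z pr sf where z: "z \<in> lang X" "morph \<sigma> z = pr @ w @ sf" by (auto simp: sublist_def)
  obtain x i where x: "x \<in> X" "z = win x i (length z)" using z(1) lang_win by blast
  have mw: "\<And>t. t < length (morph \<sigma> z) \<Longrightarrow> morph_seq \<sigma> x (cumlen \<sigma> x i + int t) = morph \<sigma> z ! t"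
    using morph_win[OF ne, of x i "length z"] x(2) by metis
  define y where "y = (\<lambda>n. morph_seq \<sigma> x (n + int 0))"
  have "0 < length (\<sigma> (x 0))" using ne by (simp add: non_erasing_def)
  then have y: "y \<in> image_shift \<sigma> X" unfolding image_shift_def y_def using x(1) by blast
  have "w = win y (cumlen \<sigma> x i + int (length pr)) (length w)"
  proof (rule nth_equalityI)
    fix t assume t: "t < length w"
    have "win y (cumlen \<sigma> x i + int (length pr)) (length w) ! t = morph_seq \<sigma> x (cumlen \<sigma> x i + int (length pr + t))"
      using t by (simp add: y_def ac_simps)
    also have "\<dots> = morph \<sigma> z ! (length pr + t)" by (rule mw) (use z(2) t in simp)
    also have "\<dots> = w ! t" using z(2) t by (simp add: nth_append)
    finally show "w ! t = win y (cumlen \<sigma> x i + int (length pr)) (length w) ! t" by simp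
  qed simp
  then show "w \<in> lang (image_shift \<sigma> X)" using y win_in_lang by metis
qed



lemma suffix_Cons_eq: "suffix (c # s) xs \<Longrightarrow> suffix (c' # s) xs \<Longrightarrow> c = c'"
  using suffix_same_len[of "c # s" xs "c' # s"] by simp

lemma prefix_snoc_eq: "prefix (p @ [d]) xs \<Longrightarrow> prefix (p @ [d']) xs \<Longrightarrow> d = d'"
  using prefix_same_len[of "p @ [d]" xs "p @ [d']"] by simp

lemma FL:
  assumes a: "a \<in> ext_left X v" and c: "suffix (c # s) (\<sigma> a)"
  shows "phi_left \<sigma> X v s a = c"
  unfolding phi_left_def
proof (rule the_equality)
  let ?T = "Tminus_bar \<sigma> X v"
  let ?Q = "\<lambda>t. t \<in> ?T \<and> strict_suffix s t \<and> suffix t (\<sigma> a)"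
  have "?Q (\<sigma> a)" using a c unfolding Tminus_bar_def strict_suffix_def suffix_def by auto
  then obtain t where t: "?Q t" and tmin: "\<And>t'. ?Q t' \<Longrightarrow> length t \<le> length t'"
    using ex_has_least_nat[of ?Q "\<sigma> a" length] by blast
  have child: "suffix_child ?T s t" unfolding suffix_child_def
  proof (intro conjI)
    show "t \<in> ?T" "strict_suffix s t" using t by auto
    show "\<not> (\<exists>t'\<in>?T. strict_suffix s t' \<and> strict_suffix t' t)"
    proof
      assume "\<exists>t'\<in>?T. strict_suffix s t' \<and> strict_suffix t' t"
      then obtain t' where t': "t' \<in> ?T" "strict_suffix s t'" "strict_suffix t' t" by blast
      then have "?Q t'" using t suffix_order.trans suffix_order.less_imp_le by blast
      then have "length t \<le> length t'" by (rule tmin)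
      moreover have "length t' < length t" using t'(3)
        by (auto simp: strict_suffix_def suffix_def)
      ultimately show False by simp
    qed
  qed
  obtain w0 where w0: "t = w0 @ s" "w0 \<noteq> []" using t by (auto simp: strict_suffix_def suffix_def)
  then obtain w c' where wc: "w0 = w @ [c']" by (cases w0 rule: rev_exhaust) auto
  have "suffix (c' # s) t" using w0 wc by (simp add: suffix_def)
  then have "suffix (c' # s) (\<sigma> a)" using t suffix_order.trans by blast
  then have "c' = c" using c suffix_Cons_eq by metis
  then show "\<exists>s'. suffix_child ?T s s' \<and> a \<in> ext_left_x \<sigma> X v s' \<and> (\<exists>w. s' = w @ [c] @ s)"
    using child t a w0 wc unfolding ext_left_x_def by auto
next
  fix c' assume "\<exists>s'. suffix_child (Tminus_bar \<sigma> X v) s s' \<and> a \<in> ext_left_x \<sigma> X v s' \<and> (\<exists>w. s' = w @ [c'] @ s)"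
  then obtain s' w where "suffix s' (\<sigma> a)" "s' = w @ [c'] @ s" unfolding ext_left_x_def by blast
  moreover have "suffix (c' # s) s'" using \<open>s' = w @ [c'] @ s\<close> by (simp add: suffix_def)
  ultimately have "suffix (c' # s) (\<sigma> a)" using suffix_order.trans by blast
  then show "c' = c" using c suffix_Cons_eq by metis
qed

lemma FR:
  assumes b: "b \<in> ext_right X v" and d: "prefix (p @ [d]) (\<sigma> b @ [l])"
  shows "phi_right \<sigma> l X v p b = d"
  unfolding phi_right_def
proof (rule the_equality)
  let ?T = "Tplus_bar \<sigma> l X v"
  let ?Q = "\<lambda>t. t \<in> ?T \<and> strict_prefix p t \<and> prefix t (\<sigma> b @ [l])"
  have "?Q (\<sigma> b @ [l])" using b d unfolding Tplus_bar_def strict_prefix_def prefix_def by auto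
  then obtain t where t: "?Q t" and tmin: "\<And>t'. ?Q t' \<Longrightarrow> length t \<le> length t'"
    using ex_has_least_nat[of ?Q "\<sigma> b @ [l]" length] by blast
  have child: "prefix_child ?T p t" unfolding prefix_child_def
  proof (intro conjI)
    show "t \<in> ?T" "strict_prefix p t" using t by auto
    show "\<not> (\<exists>t'\<in>?T. strict_prefix p t' \<and> strict_prefix t' t)"
    proof
      assume "\<exists>t'\<in>?T. strict_prefix p t' \<and> strict_prefix t' t"
      then obtain t' where t': "t' \<in> ?T" "strict_prefix p t'" "strict_prefix t' t" by blast
      then have "?Q t'" using t prefix_order.trans prefix_order.less_imp_le by blast
      then have "length t \<le> length t'" by (rule tmin)
      moreover have "length t' < length t" using t'(3)
        by (auto simp: strict_prefix_def prefix_def)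
      ultimately show False by simp
    qed
  qed
  obtain w0 where w0: "t = p @ w0" "w0 \<noteq> []" using t by (auto simp: strict_prefix_def prefix_def)
  then obtain w d' where wc: "w0 = d' # w" by (cases w0) auto
  have "prefix (p @ [d']) t" using w0 wc by (simp add: prefix_def)
  then have "prefix (p @ [d']) (\<sigma> b @ [l])" using t prefix_order.trans by blast
  then have "d' = d" using d prefix_snoc_eq by metis
  then show "\<exists>p'. prefix_child ?T p p' \<and> b \<in> ext_right_y \<sigma> l X v p' \<and> (\<exists>w. p' = p @ [d] @ w)"
    using child t b w0 wc unfolding ext_right_y_def by auto
next
  fix d' assume "\<exists>p'. prefix_child (Tplus_bar \<sigma> l X v) p p' \<and> b \<in> ext_right_y \<sigma> l X v p' \<and> (\<exists>w. p' = p @ [d'] @ w)"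
  then obtain p' w where "prefix p' (\<sigma> b @ [l])" "p' = p @ [d'] @ w" unfolding ext_right_y_def by blast
  moreover have "prefix (p @ [d']) p'" using \<open>p' = p @ [d'] @ w\<close> by (simp add: prefix_def)
  ultimately have "prefix (p @ [d']) (\<sigma> b @ [l])" using prefix_order.trans by blast
  then show "d' = d" using d prefix_snoc_eq by metis
qed


lemma EPgen:
  assumes slp: "strongly_left_proper \<sigma> l" and inj: "injective_morph \<sigma>" and ne: "non_erasing \<sigma>"
    and s: "l \<notin> set s" and p: "p = l # p'" "l \<notin> set p'"
  shows "c # (s @ morph \<sigma> v @ p) @ [d] \<in> lang (image_shift \<sigma> X) \<longleftrightarrow>
    (\<exists>a b. (a, b) \<in> ext_pairs X v \<and> suffix (c # s) (\<sigma> a) \<and> prefix (p @ [d]) (\<sigma> b @ [l]))"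
proof
  assume "c # (s @ morph \<sigma> v @ p) @ [d] \<in> lang (image_shift \<sigma> X)"
  then obtain z pr sf where z: "z \<in> lang X" "morph \<sigma> z = pr @ (c # (s @ morph \<sigma> v @ p) @ [d]) @ sf"
    using lang_image[OF ne] by (auto simp: sublist_def)
  then have "morph \<sigma> z = pr @ c # s @ morph \<sigma> v @ p @ d # sf" by simp
  then obtain z1 a b z3 where h: "z = z1 @ a # v @ b # z3" "suffix (c # s) (\<sigma> a)" "prefix (p @ [d]) (\<sigma> b @ [l])"
    using sync[OF slp inj s p] by blast
  have "sublist (a # v @ [b]) z" using h(1) unfolding sublist_def
    by (intro exI[of _ z1] exI[of _ z3]) simp
  then have "a # v @ [b] \<in> lang X" using z(1) lang_sublist by blast
  then show "\<exists>a b. (a, b) \<in> ext_pairs X v \<and> suffix (c # s) (\<sigma> a) \<and> prefix (p @ [d]) (\<sigma> b @ [l])"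
    using h unfolding ext_pairs_def by blast
next
  assume "\<exists>a b. (a, b) \<in> ext_pairs X v \<and> suffix (c # s) (\<sigma> a) \<and> prefix (p @ [d]) (\<sigma> b @ [l])"
  then obtain a b where h: "a # v @ [b] \<in> lang X" "suffix (c # s) (\<sigma> a)" "prefix (p @ [d]) (\<sigma> b @ [l])"
    unfolding ext_pairs_def by blast
  obtain e where e: "(a # v @ [b]) @ [e] \<in> lang X" using lang_ext_right[OF h(1)] by blast
  obtain we where we: "\<sigma> e = l # we" using slpD[OF slp] by blast
  obtain q where q: "\<sigma> a = q @ c # s" using h(2) by (auto simp: suffix_def)
  obtain r where r: "\<sigma> b @ [l] = p @ d # r" using h(3) by (auto simp: prefix_def)
  have "morph \<sigma> ((a # v @ [b]) @ [e]) = q @ c # s @ morph \<sigma> v @ (\<sigma> b @ [l]) @ we"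
    using q we by simp
  also have "\<dots> = q @ (c # (s @ morph \<sigma> v @ p) @ [d]) @ (r @ we)" using r by simp
  finally have "sublist (c # (s @ morph \<sigma> v @ p) @ [d]) (morph \<sigma> ((a # v @ [b]) @ [e]))"
    unfolding sublist_def by blast
  then show "c # (s @ morph \<sigma> v @ p) @ [d] \<in> lang (image_shift \<sigma> X)"
    using lang_image[OF ne] e by blast
qed

lemma ext_left_pairs: "ext_left Y u = fst ` ext_pairs Y u"
proof
  show "ext_left Y u \<subseteq> fst ` ext_pairs Y u"
  proof
    fix c assume "c \<in> ext_left Y u"
    then obtain d where "(c # u) @ [d] \<in> lang Y" using lang_ext_right unfolding ext_left_def by blast
    then show "c \<in> fst ` ext_pairs Y u" unfolding ext_pairs_def by force
  qed
  show "fst ` ext_pairs Y u \<subseteq> ext_left Y u"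
  proof
    fix c assume "c \<in> fst ` ext_pairs Y u"
    then obtain d where "c # u @ [d] \<in> lang Y" unfolding ext_pairs_def by auto
    moreover have "sublist (c # u) (c # u @ [d])" unfolding sublist_def
      by (intro exI[of _ "[]"] exI[of _ "[d]"]) simp
    ultimately show "c \<in> ext_left Y u" using lang_sublist unfolding ext_left_def by blast
  qed
qed

lemma ext_right_pairs: "ext_right Y u = snd ` ext_pairs Y u"
proof
  show "ext_right Y u \<subseteq> snd ` ext_pairs Y u"
  proof
    fix d assume "d \<in> ext_right Y u"
    then obtain c where "c # u @ [d] \<in> lang Y" using lang_ext_left unfolding ext_right_def by blast
    then show "d \<in> snd ` ext_pairs Y u" unfolding ext_pairs_def by force
  qed
  show "snd ` ext_pairs Y u \<subseteq> ext_right Y u"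
  proof
    fix d assume "d \<in> snd ` ext_pairs Y u"
    then obtain c where "c # u @ [d] \<in> lang Y" unfolding ext_pairs_def by auto
    moreover have "sublist (u @ [d]) (c # u @ [d])" unfolding sublist_def
      by (intro exI[of _ "[c]"] exI[of _ "[]"]) simp
    ultimately show "d \<in> ext_right Y u" using lang_sublist unfolding ext_right_def by blast
  qed
qed

lemma pairs_left: "(a, b) \<in> ext_pairs X v \<Longrightarrow> a \<in> ext_left X v"
proof -
  assume h: "(a, b) \<in> ext_pairs X v"
  have "sublist (a # v) (a # v @ [b])" unfolding sublist_def
    by (intro exI[of _ "[]"] exI[of _ "[b]"]) simp
  then show ?thesis using h lang_sublist unfolding ext_pairs_def ext_left_def by blast
qed

lemma pairs_right: "(a, b) \<in> ext_pairs X v \<Longrightarrow> b \<in> ext_right X v"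
proof -
  assume h: "(a, b) \<in> ext_pairs X v"
  have "sublist (v @ [b]) (a # v @ [b])" unfolding sublist_def
    by (intro exI[of _ "[a]"] exI[of _ "[]"]) simp
  then show ?thesis using h lang_sublist unfolding ext_pairs_def ext_right_def by blast
qed

lemma left_has_pair: "a \<in> ext_left X v \<Longrightarrow> \<exists>b. (a, b) \<in> ext_pairs X v"
  using lang_ext_right unfolding ext_left_def ext_pairs_def by fastforce

lemma right_has_pair: "b \<in> ext_right X v \<Longrightarrow> \<exists>a. (a, b) \<in> ext_pairs X v"
  using lang_ext_left unfolding ext_right_def ext_pairs_def by fastforce

lemma Tminus_noL:
  assumes slp: "strongly_left_proper \<sigma> l" and inj: "injective_morph \<sigma>" and s: "s \<in> Tminus \<sigma> X v"
  shows "l \<notin> set s"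
proof
  assume ls: "l \<in> set s"
  obtain a1 a2 where a: "s = lcsuffix (\<sigma> a1) (\<sigma> a2)" "a1 \<noteq> a2" using s unfolding Tminus_def by blast
  have key: "\<And>a. suffix s (\<sigma> a) \<Longrightarrow> s = \<sigma> a"
  proof -
    fix a assume sa: "suffix s (\<sigma> a)"
    obtain w where w: "\<sigma> a = l # w" "l \<notin> set w" using slpD[OF slp] by blast
    obtain zs where zs: "\<sigma> a = zs @ s" using sa by (auto simp: suffix_def)
    show "s = \<sigma> a"
    proof (cases zs)
      case Nil then show ?thesis using zs by simp
    next
      case (Cons z zs')
      then have "w = zs' @ s" using zs w by simp
      then show ?thesis using ls w by simp
    qed
  qed
  have "suffix s (\<sigma> a1)" "suffix s (\<sigma> a2)" using a(1) lcs1 lcs2 by auto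
  then have "\<sigma> a1 = \<sigma> a2" using key by metis
  then show False using inj_letter[OF inj] a(2) by blast
qed

lemma Tplus_form:
  assumes slp: "strongly_left_proper \<sigma> l" and p: "p \<in> Tplus \<sigma> X v"
  shows "\<exists>p'. p = l # p' \<and> l \<notin> set p'"
proof -
  obtain b1 b2 where b: "p = longest_common_prefix (\<sigma> b1) (\<sigma> b2)" using p unfolding Tplus_def by blast
  obtain w1 where w1: "\<sigma> b1 = l # w1" "l \<notin> set w1" using slpD[OF slp] by blast
  obtain w2 where w2: "\<sigma> b2 = l # w2" using slpD[OF slp] by blast
  have "p = l # longest_common_prefix w1 w2" using b w1 w2 by simp
  moreover have "prefix (longest_common_prefix w1 w2) w1" by (rule longest_common_prefix_prefix1)
  then have "l \<notin> set (longest_common_prefix w1 w2)" using w1(2) set_mono_prefix by blast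
  ultimately show ?thesis by blast
qed



lemma suffix_strict_ex: "suffix s x \<Longrightarrow> s \<noteq> x \<Longrightarrow> \<exists>c. suffix (c # s) x"
proof -
  assume h: "suffix s x" "s \<noteq> x"
  then obtain zs where zs: "x = zs @ s" "zs \<noteq> []" by (auto simp: suffix_def)
  then obtain zs' c where "zs = zs' @ [c]" by (cases zs rule: rev_exhaust) auto
  then show ?thesis using zs by (auto simp: suffix_def)
qed

lemma prefix_strict_ex: "prefix p x \<Longrightarrow> p \<noteq> x \<Longrightarrow> \<exists>d. prefix (p @ [d]) x"
proof -
  assume h: "prefix p x" "p \<noteq> x"
  then obtain zs where zs: "x = p @ zs" "zs \<noteq> []" by (auto simp: prefix_def)
  then obtain zs' d where "zs = d # zs'" by (cases zs) auto
  then show ?thesis using zs by (auto simp: prefix_def)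
qed

lemma suffix_Cons_D: "suffix (c # s) x \<Longrightarrow> suffix s x"
  by (auto simp: suffix_def)

lemma prefix_snoc_D: "prefix (p @ [d]) x \<Longrightarrow> prefix p x"
  by (auto simp: prefix_def)

lemma sigma_has_l: assumes "strongly_left_proper \<sigma> l" shows "l \<in> set (\<sigma> a)"
proof -
  obtain w where "\<sigma> a = l # w" using slpD[OF assms] by blast
  then show ?thesis by simp
qed

lemma prefix_cases:
  assumes slp: "strongly_left_proper \<sigma> l" and p: "p = l # p'" "l \<notin> set p'"
    and h: "prefix (p @ [d]) (\<sigma> b @ [l])"
  shows "(prefix (p @ [d]) (\<sigma> b) \<and> d \<noteq> l) \<or> (p = \<sigma> b \<and> d = l)"
proof -
  obtain r where r: "\<sigma> b @ [l] = p @ d # r" using h by (auto simp: prefix_def)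
  obtain w where w: "\<sigma> b = l # w" "l \<notin> set w" using slpD[OF slp] by blast
  show ?thesis
  proof (cases r rule: rev_exhaust)
    case Nil
    then have "\<sigma> b = p" "d = l" using r by simp_all
    then show ?thesis by simp
  next
    case (snoc r' e)
    then have "\<sigma> b = p @ d # r'" using r by simp
    then have "w = p' @ d # r'" using w p by simp
    then have "d \<noteq> l" using w(2) by auto
    then show ?thesis using \<open>\<sigma> b = p @ d # r'\<close> by (auto simp: prefix_def)
  qed
qed

lemma not_prefix_sigma_l:
  assumes slp: "strongly_left_proper \<sigma> l" and p: "p = l # p'" "l \<notin> set p'" shows "p \<noteq> \<sigma> b @ [l]"
proof
  assume "p = \<sigma> b @ [l]"
  then have e: "\<sigma> b @ [l] = l # p'" using p by simp
  obtain w where "\<sigma> b = l # w" using slpD[OF slp] by blast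
  then have "l \<in> set p'" using e by auto
  then show False using p by simp
qed

lemma part1:
  assumes slp: "strongly_left_proper \<sigma> l" and inj: "injective_morph \<sigma>" and ne: "non_erasing \<sigma>"
    and s: "s \<in> Tminus \<sigma> X v" and p: "p \<in> Tplus \<sigma> X v"
  shows "ext_pairs (image_shift \<sigma> X) (s @ morph \<sigma> v @ p) =
      (\<lambda>(a, b). (phi_left \<sigma> X v s a, phi_right \<sigma> l X v p b)) ` ext_pairs_xy \<sigma> l X v s p"
proof -
  have sl: "l \<notin> set s" by (rule Tminus_noL[OF slp inj s])
  obtain p' where pf: "p = l # p'" "l \<notin> set p'" using Tplus_form[OF slp p] by blast
  let ?u = "s @ morph \<sigma> v @ p"
  have ep: "\<And>c d. (c, d) \<in> ext_pairs (image_shift \<sigma> X) ?u \<longleftrightarrow>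
    (\<exists>a b. (a, b) \<in> ext_pairs X v \<and> suffix (c # s) (\<sigma> a) \<and> prefix (p @ [d]) (\<sigma> b @ [l]))"
  proof -
    fix c d
    have "(c, d) \<in> ext_pairs (image_shift \<sigma> X) ?u \<longleftrightarrow> c # (s @ morph \<sigma> v @ p) @ [d] \<in> lang (image_shift \<sigma> X)"
      unfolding ext_pairs_def by (simp only: mem_Collect_eq case_prod_conv)
    also have "\<dots> \<longleftrightarrow> (\<exists>a b. (a, b) \<in> ext_pairs X v \<and> suffix (c # s) (\<sigma> a) \<and> prefix (p @ [d]) (\<sigma> b @ [l]))"
      by (rule EPgen[OF slp inj ne sl pf])
    finally show "?thesis c d" .
  qed
  show ?thesis
  proof
    show "ext_pairs (image_shift \<sigma> X) ?u \<subseteq> (\<lambda>(a, b). (phi_left \<sigma> X v s a, phi_right \<sigma> l X v p b)) ` ext_pairs_xy \<sigma> l X v s p"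
    proof
      fix cd assume "cd \<in> ext_pairs (image_shift \<sigma> X) ?u"
      then obtain c d where cd: "cd = (c, d)" "(c, d) \<in> ext_pairs (image_shift \<sigma> X) ?u" by (cases cd) auto
      then obtain a b where ab: "(a, b) \<in> ext_pairs X v" "suffix (c # s) (\<sigma> a)" "prefix (p @ [d]) (\<sigma> b @ [l])"
        using ep[of c d] cd(2) by blast
      have aL: "a \<in> ext_left X v" using pairs_left[OF ab(1)] .
      have bR: "b \<in> ext_right X v" using pairs_right[OF ab(1)] .
      have "(a, b) \<in> ext_pairs_xy \<sigma> l X v s p"
        unfolding ext_pairs_xy_def ext_left_x_def ext_right_y_def
        using ab(1) aL bR suffix_Cons_D[OF ab(2)] prefix_snoc_D[OF ab(3)] by simp
      moreover have "phi_left \<sigma> X v s a = c" by (rule FL[where \<sigma>=\<sigma>, OF aL ab(2)])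
      moreover have "phi_right \<sigma> l X v p b = d" by (rule FR[where \<sigma>=\<sigma>, OF bR ab(3)])
      ultimately show "cd \<in> (\<lambda>(a, b). (phi_left \<sigma> X v s a, phi_right \<sigma> l X v p b)) ` ext_pairs_xy \<sigma> l X v s p"
        using cd(1) by (auto intro!: image_eqI[where x="(a, b)"])
    qed
  next
    show "(\<lambda>(a, b). (phi_left \<sigma> X v s a, phi_right \<sigma> l X v p b)) ` ext_pairs_xy \<sigma> l X v s p \<subseteq> ext_pairs (image_shift \<sigma> X) ?u"
    proof
      fix cd assume "cd \<in> (\<lambda>(a, b). (phi_left \<sigma> X v s a, phi_right \<sigma> l X v p b)) ` ext_pairs_xy \<sigma> l X v s p"
      then obtain a b where ab: "(a, b) \<in> ext_pairs_xy \<sigma> l X v s p" "cd = (phi_left \<sigma> X v s a, phi_right \<sigma> l X v p b)"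
        by auto
      then have ab2: "(a, b) \<in> ext_pairs X v" "a \<in> ext_left X v" "suffix s (\<sigma> a)" "b \<in> ext_right X v"
        "prefix p (\<sigma> b @ [l])"
        unfolding ext_pairs_xy_def ext_left_x_def ext_right_y_def by auto
      have "s \<noteq> \<sigma> a" using sl sigma_has_l[OF slp, of a] by auto
      then obtain c where c: "suffix (c # s) (\<sigma> a)" using suffix_strict_ex ab2(3) by blast
      obtain d where d: "prefix (p @ [d]) (\<sigma> b @ [l])"
        using prefix_strict_ex ab2(5) not_prefix_sigma_l[OF slp pf] by blast
      have "phi_left \<sigma> X v s a = c" by (rule FL[where \<sigma>=\<sigma>, OF ab2(2) c])
      moreover have "phi_right \<sigma> l X v p b = d" by (rule FR[where \<sigma>=\<sigma>, OF ab2(4) d])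
      moreover have "(c, d) \<in> ext_pairs (image_shift \<sigma> X) ?u" using ep[of c d] ab2(1) c d by blast
      ultimately show "cd \<in> ext_pairs (image_shift \<sigma> X) ?u" using ab(2) by simp
    qed
  qed
qed



lemma card2_ex: assumes "2 \<le> card A" shows "\<exists>x\<in>A. \<exists>y\<in>A. x \<noteq> y"
proof (rule ccontr)
  assume "\<not> ?thesis"
  then have "\<forall>x\<in>A. \<forall>y\<in>A. x = y" by blast
  moreover have "finite A" using assms by (metis card.infinite not_numeral_le_zero)
  ultimately have "card A \<le> Suc 0" using card_le_Suc0_iff_eq by blast
  then show False using assms by simp
qed

lemma other_elem: assumes "2 \<le> card A" "a \<in> A" shows "\<exists>a2\<in>A. a2 \<noteq> a"
  using card2_ex[OF assms(1)] assms(2) by metis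

lemma suffix_len: "suffix xs ys \<Longrightarrow> length xs \<le> length ys"
  by (auto simp: suffix_def)

lemma prefix_len: "prefix xs ys \<Longrightarrow> length xs \<le> length ys"
  by (auto simp: prefix_def)

lemma part1_full:
  assumes slp: "strongly_left_proper \<sigma> l" and inj: "injective_morph \<sigma>" and ne: "non_erasing \<sigma>"
    and s: "s \<in> Tminus \<sigma> X v" and p: "p \<in> Tplus \<sigma> X v"
  shows "ext_left (image_shift \<sigma> X) (s @ morph \<sigma> v @ p) = phi_left \<sigma> X v s ` (fst ` ext_pairs_xy \<sigma> l X v s p)
    \<and> ext_right (image_shift \<sigma> X) (s @ morph \<sigma> v @ p) = phi_right \<sigma> l X v p ` (snd ` ext_pairs_xy \<sigma> l X v s p)
    \<and> ext_pairs (image_shift \<sigma> X) (s @ morph \<sigma> v @ p) =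
      (\<lambda>(a, b). (phi_left \<sigma> X v s a, phi_right \<sigma> l X v p b)) ` ext_pairs_xy \<sigma> l X v s p"
proof -
  note P = part1[OF slp inj ne s p]
  have "fst ` ((\<lambda>(a, b). (phi_left \<sigma> X v s a, phi_right \<sigma> l X v p b)) ` ext_pairs_xy \<sigma> l X v s p)
     = phi_left \<sigma> X v s ` (fst ` ext_pairs_xy \<sigma> l X v s p)"
    by (simp add: image_image case_prod_beta)
  moreover have "snd ` ((\<lambda>(a, b). (phi_left \<sigma> X v s a, phi_right \<sigma> l X v p b)) ` ext_pairs_xy \<sigma> l X v s p)
     = phi_right \<sigma> l X v p ` (snd ` ext_pairs_xy \<sigma> l X v s p)"
    by (simp add: image_image case_prod_beta)
  ultimately show ?thesis using P ext_left_pairs ext_right_pairs by metis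
qed


lemma epY:
  assumes slp: "strongly_left_proper \<sigma> l" and inj: "injective_morph \<sigma>" and ne: "non_erasing \<sigma>"
    and s: "l \<notin> set s" and p: "p = l # p'" "l \<notin> set p'"
  shows "(c, d) \<in> ext_pairs (image_shift \<sigma> X) (s @ morph \<sigma> v @ p) \<longleftrightarrow>
    (\<exists>a b. (a, b) \<in> ext_pairs X v \<and> suffix (c # s) (\<sigma> a) \<and> prefix (p @ [d]) (\<sigma> b @ [l]))"
proof -
  have "(c, d) \<in> ext_pairs (image_shift \<sigma> X) (s @ morph \<sigma> v @ p) \<longleftrightarrow> c # (s @ morph \<sigma> v @ p) @ [d] \<in> lang (image_shift \<sigma> X)"
    unfolding ext_pairs_def by (simp only: mem_Collect_eq case_prod_conv)
  also have "\<dots> \<longleftrightarrow> (\<exists>a b. (a, b) \<in> ext_pairs X v \<and> suffix (c # s) (\<sigma> a) \<and> prefix (p @ [d]) (\<sigma> b @ [l]))"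
    by (rule EPgen[OF slp inj ne s p])
  finally show ?thesis .
qed

lemma part2:
  fixes X :: "(int \<Rightarrow> 'a::finite) set" and \<sigma> :: "'a \<Rightarrow> ('b::finite) list"
  assumes slp: "strongly_left_proper \<sigma> l" and inj: "injective_morph \<sigma>" and ne: "non_erasing \<sigma>"
    and bs: "bispecial X v" and T1: "Tminus \<sigma> X v = {s0}" and T2: "Tplus \<sigma> X v = {p0}"
  defines "Y \<equiv> image_shift \<sigma> X" and "u \<equiv> s0 @ morph \<sigma> v @ p0"
    and "E \<equiv> ext_pairs_xy \<sigma> l X v s0 p0"
    and "fL \<equiv> phi_left \<sigma> X v s0" and "fR \<equiv> phi_right \<sigma> l X v p0"
  shows "(\<exists>!u'. extended_image \<sigma> X v u' \<and> bispecial Y u') \<and>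
          extended_image \<sigma> X v u \<and> bispecial Y u \<and>
          bij_betw fL (fst ` E) (ext_left Y u) \<and>
          bij_betw fR (snd ` E) (ext_right Y u) \<and>
          (\<forall>a\<in>fst ` E. \<forall>b\<in>snd ` E. (a, b) \<in> E \<longleftrightarrow> (fL a, fR b) \<in> ext_pairs Y u)"
proof -
  have vL: "v \<in> lang X" and cL: "2 \<le> card (ext_left X v)" and cR: "2 \<le> card (ext_right X v)"
    using bs unfolding bispecial_def by auto
  have s0T: "s0 \<in> Tminus \<sigma> X v" and p0T: "p0 \<in> Tplus \<sigma> X v" using T1 T2 by auto
  have s0l: "l \<notin> set s0" by (rule Tminus_noL[OF slp inj s0T])
  obtain p0' where p0f: "p0 = l # p0'" "l \<notin> set p0'" using Tplus_form[OF slp p0T] by blast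
  have A2: "\<And>a1 a2. a1 \<in> ext_left X v \<Longrightarrow> a2 \<in> ext_left X v \<Longrightarrow> a1 \<noteq> a2 \<Longrightarrow> lcsuffix (\<sigma> a1) (\<sigma> a2) = s0"
  proof -
    fix a1 a2 assume "a1 \<in> ext_left X v" "a2 \<in> ext_left X v" "a1 \<noteq> a2"
    then have "lcsuffix (\<sigma> a1) (\<sigma> a2) \<in> Tminus \<sigma> X v" unfolding Tminus_def by blast
    then show "lcsuffix (\<sigma> a1) (\<sigma> a2) = s0" using T1 by blast
  qed
  have A1: "\<And>a. a \<in> ext_left X v \<Longrightarrow> suffix s0 (\<sigma> a)"
  proof -
    fix a assume a: "a \<in> ext_left X v"
    obtain a2 where "a2 \<in> ext_left X v" "a2 \<noteq> a" using other_elem[OF cL a] by blast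
    then have "lcsuffix (\<sigma> a) (\<sigma> a2) = s0" using A2 a by metis
    then show "suffix s0 (\<sigma> a)" using lcs1 by metis
  qed
  have B2: "\<And>b1 b2. b1 \<in> ext_right X v \<Longrightarrow> b2 \<in> ext_right X v \<Longrightarrow> b1 \<noteq> b2 \<Longrightarrow> longest_common_prefix (\<sigma> b1) (\<sigma> b2) = p0"
  proof -
    fix b1 b2 assume "b1 \<in> ext_right X v" "b2 \<in> ext_right X v" "b1 \<noteq> b2"
    then have "longest_common_prefix (\<sigma> b1) (\<sigma> b2) \<in> Tplus \<sigma> X v" unfolding Tplus_def by blast
    then show "longest_common_prefix (\<sigma> b1) (\<sigma> b2) = p0" using T2 by blast
  qed
  have B1: "\<And>b. b \<in> ext_right X v \<Longrightarrow> prefix p0 (\<sigma> b)"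
  proof -
    fix b assume b: "b \<in> ext_right X v"
    obtain b2 where "b2 \<in> ext_right X v" "b2 \<noteq> b" using other_elem[OF cR b] by blast
    then have "longest_common_prefix (\<sigma> b) (\<sigma> b2) = p0" using B2 b by metis
    then show "prefix p0 (\<sigma> b)" using longest_common_prefix_prefix1 by metis
  qed
  have B1': "\<And>b. b \<in> ext_right X v \<Longrightarrow> prefix p0 (\<sigma> b @ [l])"
    using B1 prefix_order.trans by (metis prefixI)
  have Eall: "E = ext_pairs X v"
    unfolding E_def ext_pairs_xy_def ext_left_x_def ext_right_y_def
  proof (intro equalityI subsetI)
    fix ab assume "ab \<in> ext_pairs X v"
    then obtain a b where ab: "ab = (a, b)" "(a, b) \<in> ext_pairs X v" by (cases ab) auto
    have "a \<in> ext_left X v" "b \<in> ext_right X v" using pairs_left[OF ab(2)] pairs_right[OF ab(2)] .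
    then show "ab \<in> ext_pairs X v \<inter> {a \<in> ext_left X v. suffix s0 (\<sigma> a)} \<times> {b \<in> ext_right X v. prefix p0 (\<sigma> b @ [l])}"
      using ab A1 B1' by auto
  qed auto
  have fstE: "fst ` E = ext_left X v"
  proof
    show "fst ` E \<subseteq> ext_left X v" using Eall pairs_left by force
    show "ext_left X v \<subseteq> fst ` E"
    proof
      fix a assume "a \<in> ext_left X v"
      then obtain b where "(a, b) \<in> ext_pairs X v" using left_has_pair by metis
      then show "a \<in> fst ` E" using Eall by force
    qed
  qed
  have sndE: "snd ` E = ext_right X v"
  proof
    show "snd ` E \<subseteq> ext_right X v" using Eall pairs_right by force
    show "ext_right X v \<subseteq> snd ` E"
    proof
      fix b assume "b \<in> ext_right X v"
      then obtain a where "(a, b) \<in> ext_pairs X v" using right_has_pair by metis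
      then show "b \<in> snd ` E" using Eall by force
    qed
  qed
  have cLex: "\<And>a. a \<in> ext_left X v \<Longrightarrow> \<exists>c. suffix (c # s0) (\<sigma> a) \<and> fL a = c"
  proof -
    fix a assume a: "a \<in> ext_left X v"
    have "s0 \<noteq> \<sigma> a" using s0l sigma_has_l[OF slp, of a] by auto
    then obtain c where c: "suffix (c # s0) (\<sigma> a)" using suffix_strict_ex A1[OF a] by blast
    then show "\<exists>c. suffix (c # s0) (\<sigma> a) \<and> fL a = c" using FL[where \<sigma>=\<sigma>, OF a c] unfolding fL_def by blast
  qed
  have dRex: "\<And>b. b \<in> ext_right X v \<Longrightarrow> \<exists>d. prefix (p0 @ [d]) (\<sigma> b @ [l]) \<and> fR b = d"
  proof -
    fix b assume b: "b \<in> ext_right X v"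
    obtain d where d: "prefix (p0 @ [d]) (\<sigma> b @ [l])"
      using prefix_strict_ex B1'[OF b] not_prefix_sigma_l[OF slp p0f] by blast
    then show "\<exists>d. prefix (p0 @ [d]) (\<sigma> b @ [l]) \<and> fR b = d" using FR[where \<sigma>=\<sigma>, OF b d] unfolding fR_def by blast
  qed
  have injL: "inj_on fL (ext_left X v)"
  proof (rule inj_onI)
    fix a1 a2 assume a: "a1 \<in> ext_left X v" "a2 \<in> ext_left X v" "fL a1 = fL a2"
    show "a1 = a2"
    proof (rule ccontr)
      assume ne12: "a1 \<noteq> a2"
      obtain c1 where c1: "suffix (c1 # s0) (\<sigma> a1)" "fL a1 = c1" using cLex[OF a(1)] by blast
      obtain c2 where c2: "suffix (c2 # s0) (\<sigma> a2)" "fL a2 = c2" using cLex[OF a(2)] by blast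
      have "c1 = c2" using a(3) c1 c2 by simp
      then have "suffix (c1 # s0) (lcsuffix (\<sigma> a1) (\<sigma> a2))" using lcs_max c1 c2 by metis
      then have "suffix (c1 # s0) s0" using A2[OF a(1,2) ne12] by simp
      then show False using suffix_len by fastforce
    qed
  qed
  have injR: "inj_on fR (ext_right X v)"
  proof (rule inj_onI)
    fix b1 b2 assume b: "b1 \<in> ext_right X v" "b2 \<in> ext_right X v" "fR b1 = fR b2"
    show "b1 = b2"
    proof (rule ccontr)
      assume ne12: "b1 \<noteq> b2"
      obtain d1 where d1: "prefix (p0 @ [d1]) (\<sigma> b1 @ [l])" "fR b1 = d1" using dRex[OF b(1)] by blast
      obtain d2 where d2: "prefix (p0 @ [d2]) (\<sigma> b2 @ [l])" "fR b2 = d2" using dRex[OF b(2)] by blast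
      have dd: "d1 = d2" using b(3) d1 d2 by simp
      note C1 = prefix_cases[OF slp p0f d1(1)] and C2 = prefix_cases[OF slp p0f d2(1)]
      show False
      proof (cases "d1 = l")
        case True
        then have "p0 = \<sigma> b1" "p0 = \<sigma> b2" using C1 C2 dd by auto
        then show False using inj_letter[OF inj] ne12 by metis
      next
        case False
        then have "prefix (p0 @ [d1]) (\<sigma> b1)" "prefix (p0 @ [d1]) (\<sigma> b2)" using C1 C2 dd by auto
        then have "prefix (p0 @ [d1]) (longest_common_prefix (\<sigma> b1) (\<sigma> b2))"
          using longest_common_prefix_max_prefix by metis
        then have "prefix (p0 @ [d1]) p0" using B2[OF b(1,2) ne12] by simp
        then show False using prefix_len by fastforce
      qed
    qed
  qed
  note P1 = part1_full[OF slp inj ne s0T p0T]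
  have eL: "ext_left Y u = fL ` ext_left X v"
    using P1 fstE unfolding Y_def u_def E_def fL_def by simp
  have eR: "ext_right Y u = fR ` ext_right X v"
    using P1 sndE unfolding Y_def u_def E_def fR_def by simp
  have eP: "ext_pairs Y u = (\<lambda>(a, b). (fL a, fR b)) ` E"
    using P1 unfolding Y_def u_def E_def fL_def fR_def by blast
  have bijL: "bij_betw fL (fst ` E) (ext_left Y u)" unfolding bij_betw_def using injL fstE eL by simp
  have bijR: "bij_betw fR (snd ` E) (ext_right Y u)" unfolding bij_betw_def using injR sndE eR by simp
  have cardL: "card (ext_left Y u) = card (ext_left X v)" using eL injL card_image by metis
  have cardR: "card (ext_right Y u) = card (ext_right X v)" using eR injR card_image by metis
  obtain a0 where a0: "a0 \<in> ext_left X v" using card2_ex[OF cL] by blast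
  then have "fL a0 \<in> ext_left Y u" using eL by blast
  then have "fL a0 # u \<in> lang Y" unfolding ext_left_def by simp
  moreover have "sublist u (fL a0 # u)" unfolding sublist_def by (intro exI[of _ "[fL a0]"] exI[of _ "[]"]) simp
  ultimately have uY: "u \<in> lang Y" using lang_sublist by blast
  have bsY: "bispecial Y u" unfolding bispecial_def using uY cardL cardR cL cR by simp
  have extu: "extended_image \<sigma> X v u"
  proof -
    obtain b0 where b0: "(a0, b0) \<in> ext_pairs X v" using left_has_pair a0 by metis
    obtain c where c: "suffix (c # s0) (\<sigma> a0)" using cLex[OF a0] by blast
    have "strict_suffix s0 (\<sigma> a0)" using c suffix_Cons_D suffix_len unfolding strict_suffix_def by fastforce
    moreover have "prefix p0 (\<sigma> b0)" using B1 pairs_right[OF b0] by blast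
    ultimately show ?thesis unfolding extended_image_def ext_image_via_def u_def
      using vL b0 p0f by blast
  qed
  have edges: "\<forall>a\<in>fst ` E. \<forall>b\<in>snd ` E. (a, b) \<in> E \<longleftrightarrow> (fL a, fR b) \<in> ext_pairs Y u"
  proof (intro ballI iffI)
    fix a b assume "(a, b) \<in> E"
    then show "(fL a, fR b) \<in> ext_pairs Y u" using eP by force
  next
    fix a b assume ab: "a \<in> fst ` E" "b \<in> snd ` E" "(fL a, fR b) \<in> ext_pairs Y u"
    then obtain a' b' where ab': "(a', b') \<in> E" "fL a = fL a'" "fR b = fR b'" using eP by auto
    have "a' \<in> ext_left X v" "b' \<in> ext_right X v" using ab' fstE sndE by force+
    then have "a = a'" "b = b'" using injL injR ab ab' fstE sndE unfolding inj_on_def by auto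
    then show "(a, b) \<in> E" using ab' by simp
  qed
  have uniq: "\<And>u'. extended_image \<sigma> X v u' \<Longrightarrow> bispecial Y u' \<Longrightarrow> u' = u"
  proof -
    fix u' assume ei: "extended_image \<sigma> X v u'" and bu: "bispecial Y u'"
    obtain s p a b where u': "u' = s @ morph \<sigma> v @ p" and ab: "(a, b) \<in> ext_pairs X v"
      and ss: "strict_suffix s (\<sigma> a)" and pn: "p \<noteq> []" and pp: "prefix p (\<sigma> b)"
      using ei unfolding extended_image_def ext_image_via_def by blast
    obtain wa where wa: "\<sigma> a = l # wa" "l \<notin> set wa" using slpD[OF slp] by blast
    obtain zs where zs: "\<sigma> a = zs @ s" "zs \<noteq> []" using ss unfolding strict_suffix_def suffix_def by auto
    then obtain z zs' where "zs = z # zs'" by (cases zs) auto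
    then have "wa = zs' @ s" using zs wa by simp
    then have sl: "l \<notin> set s" using wa by auto
    obtain wb where wb: "\<sigma> b = l # wb" "l \<notin> set wb" using slpD[OF slp] by blast
    obtain p' where pf: "p = l # p'" "prefix p' wb" using pp pn wb by (cases p) auto
    have pl: "l \<notin> set p'" using pf(2) wb(2) set_mono_prefix by blast
    note ep = epY[OF slp inj ne sl pf(1) pl]
    have cLu: "2 \<le> card (ext_left Y u')" and cRu: "2 \<le> card (ext_right Y u')"
      using bu unfolding bispecial_def by auto
    obtain c1 c2 where c12: "c1 \<in> ext_left Y u'" "c2 \<in> ext_left Y u'" "c1 \<noteq> c2" using card2_ex[OF cLu] by blast
    have getc: "\<And>c. c \<in> ext_left Y u' \<Longrightarrow> \<exists>a. a \<in> ext_left X v \<and> suffix (c # s) (\<sigma> a)"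
    proof -
      fix c assume "c \<in> ext_left Y u'"
      then obtain d where "(c, d) \<in> ext_pairs Y u'" using ext_left_pairs by force
      then obtain a b where ab: "(a, b) \<in> ext_pairs X v" "suffix (c # s) (\<sigma> a)"
        using ep unfolding Y_def u' by blast
      then show "\<exists>a. a \<in> ext_left X v \<and> suffix (c # s) (\<sigma> a)" using pairs_left[OF ab(1)] by blast
    qed
    obtain a1 where a1: "a1 \<in> ext_left X v" "suffix (c1 # s) (\<sigma> a1)" using getc[OF c12(1)] by blast
    obtain a2 where a2: "a2 \<in> ext_left X v" "suffix (c2 # s) (\<sigma> a2)" using getc[OF c12(2)] by blast
    have a12: "a1 \<noteq> a2" using a1 a2 c12(3) suffix_Cons_eq by metis
    have "suffix s (lcsuffix (\<sigma> a1) (\<sigma> a2))" using lcs_max suffix_Cons_D a1(2) a2(2) by metis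
    then have ss0: "suffix s s0" using A2[OF a1(1) a2(1) a12] by simp
    have s_eq: "s = s0"
    proof (rule ccontr)
      assume "s \<noteq> s0"
      then obtain e where e: "suffix (e # s) s0" using suffix_strict_ex ss0 by blast
      have "suffix (e # s) (\<sigma> a1)" using e A1[OF a1(1)] suffix_order.trans by blast
      moreover have "suffix (e # s) (\<sigma> a2)" using e A1[OF a2(1)] suffix_order.trans by blast
      ultimately show False using a1(2) a2(2) c12(3) suffix_Cons_eq by metis
    qed
    obtain d1 d2 where d12: "d1 \<in> ext_right Y u'" "d2 \<in> ext_right Y u'" "d1 \<noteq> d2" using card2_ex[OF cRu] by blast
    have getd: "\<And>d. d \<in> ext_right Y u' \<Longrightarrow> \<exists>b. b \<in> ext_right X v \<and> prefix (p @ [d]) (\<sigma> b @ [l])"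
    proof -
      fix d assume "d \<in> ext_right Y u'"
      then obtain c where "(c, d) \<in> ext_pairs Y u'" using ext_right_pairs by force
      then obtain a b where ab: "(a, b) \<in> ext_pairs X v" "prefix (p @ [d]) (\<sigma> b @ [l])"
        using ep unfolding Y_def u' by blast
      then show "\<exists>b. b \<in> ext_right X v \<and> prefix (p @ [d]) (\<sigma> b @ [l])" using pairs_right[OF ab(1)] by blast
    qed
    obtain b1 where b1: "b1 \<in> ext_right X v" "prefix (p @ [d1]) (\<sigma> b1 @ [l])" using getd[OF d12(1)] by blast
    obtain b2 where b2: "b2 \<in> ext_right X v" "prefix (p @ [d2]) (\<sigma> b2 @ [l])" using getd[OF d12(2)] by blast
    have b12: "b1 \<noteq> b2" using b1 b2 d12(3) prefix_snoc_eq by metis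
    have pb1: "prefix p (\<sigma> b1)" using prefix_cases[OF slp pf(1) pl b1(2)] prefix_snoc_D by auto
    have pb2: "prefix p (\<sigma> b2)" using prefix_cases[OF slp pf(1) pl b2(2)] prefix_snoc_D by auto
    have "prefix p (longest_common_prefix (\<sigma> b1) (\<sigma> b2))" using longest_common_prefix_max_prefix pb1 pb2 by metis
    then have pp0: "prefix p p0" using B2[OF b1(1) b2(1) b12] by simp
    have p_eq: "p = p0"
    proof (rule ccontr)
      assume "p \<noteq> p0"
      then obtain e where e: "prefix (p @ [e]) p0" using prefix_strict_ex pp0 by blast
      have "prefix (p @ [e]) (\<sigma> b1 @ [l])" using e B1'[OF b1(1)] prefix_order.trans by blast
      moreover have "prefix (p @ [e]) (\<sigma> b2 @ [l])" using e B1'[OF b2(1)] prefix_order.trans by blast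
      ultimately show False using b1(2) b2(2) d12(3) prefix_snoc_eq by metis
    qed
    show "u' = u" using u' s_eq p_eq unfolding u_def by simp
  qed
  have ex1: "\<exists>!u'. extended_image \<sigma> X v u' \<and> bispecial Y u'"
    using extu bsY uniq by blast
  show ?thesis using ex1 extu bsY bijL bijR edges by blast
qed

theorem proposition4p4:
  fixes X :: "(int \<Rightarrow> 'a::finite) set"
    and \<sigma> :: "'a \<Rightarrow> ('b::finite) list"
    and l :: 'b
    and v :: "'a list"
  assumes X: "shift_space X"
    and ne: "non_erasing \<sigma>"
    and inj: "injective_morph \<sigma>"
    and slp: "strongly_left_proper \<sigma> l"
    and v: "v \<in> lang X" "bispecial X v"
  defines "Y \<equiv> image_shift \<sigma> X"
  shows
    "(\<forall>s p. s \<in> Tminus \<sigma> X v \<longrightarrow> p \<in> Tplus \<sigma> X v \<longrightarrow> ext_image_via \<sigma> X v s p \<longrightarrow>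
        (let u = s @ morph \<sigma> v @ p; E = ext_pairs_xy \<sigma> l X v s p;
             fL = phi_left \<sigma> X v s; fR = phi_right \<sigma> l X v p in
          ext_left Y u = fL ` (fst ` E) \<and>
          ext_right Y u = fR ` (snd ` E) \<and>
          ext_pairs Y u = (\<lambda>(a, b). (fL a, fR b)) ` E))
   \<and> (\<forall>s0 p0. Tminus \<sigma> X v = {s0} \<longrightarrow> Tplus \<sigma> X v = {p0} \<longrightarrow>
        (let u = s0 @ morph \<sigma> v @ p0; E = ext_pairs_xy \<sigma> l X v s0 p0;
             fL = phi_left \<sigma> X v s0; fR = phi_right \<sigma> l X v p0 in
          (\<exists>!u'. extended_image \<sigma> X v u' \<and> bispecial Y u') \<and>
          extended_image \<sigma> X v u \<and> bispecial Y u \<and>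
          bij_betw fL (fst ` E) (ext_left Y u) \<and>
          bij_betw fR (snd ` E) (ext_right Y u) \<and>
          (\<forall>a\<in>fst ` E. \<forall>b\<in>snd ` E. (a, b) \<in> E \<longleftrightarrow> (fL a, fR b) \<in> ext_pairs Y u)))"
proof -
  show ?thesis
  proof (intro conjI allI impI)
    fix s p assume s: "s \<in> Tminus \<sigma> X v" and p: "p \<in> Tplus \<sigma> X v" and "ext_image_via \<sigma> X v s p"
    show "let u = s @ morph \<sigma> v @ p; E = ext_pairs_xy \<sigma> l X v s p;
             fL = phi_left \<sigma> X v s; fR = phi_right \<sigma> l X v p in
          ext_left Y u = fL ` (fst ` E) \<and>
          ext_right Y u = fR ` (snd ` E) \<and>
          ext_pairs Y u = (\<lambda>(a, b). (fL a, fR b)) ` E"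
      unfolding Let_def Y_def using part1_full[OF slp inj ne s p] by blast
  next
    fix s0 p0 assume T1: "Tminus \<sigma> X v = {s0}" and T2: "Tplus \<sigma> X v = {p0}"
    show "let u = s0 @ morph \<sigma> v @ p0; E = ext_pairs_xy \<sigma> l X v s0 p0;
             fL = phi_left \<sigma> X v s0; fR = phi_right \<sigma> l X v p0 in
          (\<exists>!u'. extended_image \<sigma> X v u' \<and> bispecial Y u') \<and>
          extended_image \<sigma> X v u \<and> bispecial Y u \<and>
          bij_betw fL (fst ` E) (ext_left Y u) \<and>
          bij_betw fR (snd ` E) (ext_right Y u) \<and>
          (\<forall>a\<in>fst ` E. \<forall>b\<in>snd ` E. (a, b) \<in> E \<longleftrightarrow> (fL a, fR b) \<in> ext_pairs Y u)"
      unfolding Let_def Y_def using part2[OF slp inj ne v(2) T1 T2] by blast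
  qed
qed

end
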